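(* Let $q\in(0,1)$, $\beta<1$ real, $z\in\mathbb{C}\setminus\{0\}$ with $1+z^2\ne0$, and suppose $\beta(1+z^2)=q^2+z^2$. Then for all $n\in\mathbb{N}_0$, \[ p_n^{(q,\beta)}(z+z^{-1};q)=\frac{(q^2;q)_n}{z^n\left((q^2+z^2)/(1+z^2);q\right)_n}. \]
   Context: $(a;q)_n:=\prod_{j=0}^{n-1}(1-aq^j)$. The monic polynomials $p_n^{(\alpha,\beta)}(x;q)$ satisfy $p_{-1}=0$, $p_0=1$, $p_{n+1}(x)=xp_n(x)-\tilde\gamma_{n-1}\tilde\gamma_np_{n-1}(x)$ for $n\in\mathbb{N}_0$ with $\tilde\gamma_n=(1-\alpha q^n)/(1-\beta q^n)$; here $\alpha=q$. *)

theory Defs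
  imports "HOL-Analysis.Analysis"
begin

definition qpoch :: "complex \<Rightarrow> complex \<Rightarrow> nat \<Rightarrow> complex" where
  "qpoch a q n = (\<Prod>j<n. 1 - a * q ^ j)"

definition gtilde :: "complex \<Rightarrow> complex \<Rightarrow> complex \<Rightarrow> int \<Rightarrow> complex" where
  "gtilde \<alpha> \<beta> q n = (1 - \<alpha> * q powi n) / (1 - \<beta> * q powi n)"

text \<open>Monic polynomials p_n^{(alpha,beta)}(x;q): p_{-1}=0, p_0=1,
  p_{n+1}(x) = x p_n(x) - gtilde_{n-1} gtilde_n p_{n-1}(x).
  pp n = p_n evaluated at x, for n \<ge> 0; the term with p_{-1}=0 vanishes.\<close>
fun pp :: "complex \<Rightarrow> complex \<Rightarrow> complex \<Rightarrow> nat \<Rightarrow> complex \<Rightarrow> complex" where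
  "pp \<alpha> \<beta> q 0 x = 1"
| "pp \<alpha> \<beta> q (Suc 0) x = x"
| "pp \<alpha> \<beta> q (Suc (Suc n)) x =
     x * pp \<alpha> \<beta> q (Suc n) x
     - gtilde \<alpha> \<beta> q (int n) * gtilde \<alpha> \<beta> q (int n + 1) * pp \<alpha> \<beta> q n x"

end

theory Submission
  imports Defs
begin

lemma comb:
  fixes z w R A C E D1 D2 :: complex
  assumes "D1\<noteq>0" "D2\<noteq>0" "z\<noteq>0" "w\<noteq>0"
  shows "(z+inverse z)*(R*(A/D1)/(z*w)) - (C/D1)*(E/D2)*(R/w)
     = R*((z^2+1)*A*D2 - z^2*C*E) / (D1*D2*(z*(z*w)))"
  using assms by (simp add: field_simps power2_eq_square)

lemma key:
  fixes b z Q q R :: complex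
  assumes h: "b*(1+z^2) = q^2+z^2" and d1: "1-b*Q\<noteq>0" and d2: "1-b*(q*Q)\<noteq>0" and z: "z\<noteq>0"
  shows "R*((1-q^2*Q)/(1-b*Q))*((1-q^2*(q*Q))/(1-b*(q*Q)))/(z*(z*z^n)) =
    (z+inverse z)*(R*((1-q^2*Q)/(1-b*Q))/(z*z^n)) - ((1-q*Q)/(1-b*Q))*((1-q*(q*Q))/(1-b*(q*Q)))*(R/z^n)"
proof -
  have num: "(1-q^2*Q)*(1-q^2*(q*Q)) = (z^2+1)*(1-q^2*Q)*(1-b*(q*Q)) - z^2*(1-q*Q)*(1-q*(q*Q))"
  proof -
    have "(z^2+1)*(1-q^2*Q)*(1-b*(q*Q)) - z^2*(1-q*Q)*(1-q*(q*Q)) - (1-q^2*Q)*(1-q^2*(q*Q))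
      = (1-q^2*Q)*(q*Q)*(q^2+z^2 - b*(1+z^2))"
      by (simp add: algebra_simps power2_eq_square power3_eq_cube)
    also have "\<dots> = 0" using h by simp
    finally show ?thesis by simp
  qed
  have "(z+inverse z)*(R*((1-q^2*Q)/(1-b*Q))/(z*z^n)) - ((1-q*Q)/(1-b*Q))*((1-q*(q*Q))/(1-b*(q*Q)))*(R/z^n)
     = R*((z^2+1)*(1-q^2*Q)*(1-b*(q*Q)) - z^2*(1-q*Q)*(1-q*(q*Q))) / ((1-b*Q)*(1-b*(q*Q))*(z*(z*z^n)))"
    by (rule comb) (use d1 d2 z in auto)
  also have "\<dots> = R*((1-q^2*Q)*(1-q^2*(q*Q))) / ((1-b*Q)*(1-b*(q*Q))*(z*(z*z^n)))"
    by (simp only: num)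
  also have "\<dots> = R*((1-q^2*Q)/(1-b*Q))*((1-q^2*(q*Q))/(1-b*(q*Q)))/(z*(z*z^n))"
    using d1 d2 z by (simp add: field_simps)
  finally show ?thesis by simp
qed

lemma qpoch_Suc: "qpoch a q (Suc n) = qpoch a q n * (1 - a * q ^ n)"
  by (simp add: qpoch_def)

theorem corollary2p19:
  fixes q \<beta> :: real and z :: complex and n :: nat
  assumes "0 < q" "q < 1" "\<beta> < 1" "z \<noteq> 0" "1 + z^2 \<noteq> 0"
    and "complex_of_real \<beta> * (1 + z^2) = complex_of_real q ^ 2 + z^2"
  shows "pp (complex_of_real q) (complex_of_real \<beta>) (complex_of_real q) n (z + inverse z)
       = qpoch (complex_of_real q ^ 2) (complex_of_real q) n
         / (z ^ n * qpoch ((complex_of_real q ^ 2 + z^2) / (1 + z^2)) (complex_of_real q) n)"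
proof -
  define Q where "Q = complex_of_real q"
  define B where "B = complex_of_real \<beta>"
  define x where "x = z + inverse z"
  have h: "B * (1 + z^2) = Q^2 + z^2" using assms(6) by (simp add: Q_def B_def)
  have wB: "(Q ^ 2 + z^2) / (1 + z^2) = B" using h assms(5)
    by (simp add: field_simps)
  have nzr: "\<beta> * q ^ j < 1" for j
  proof (cases "\<beta> \<le> 0")
    case True
    then show ?thesis using assms(1) by (smt (verit) mult_nonpos_nonneg zero_le_power)
  next
    case False
    have "q ^ j \<le> 1" using assms(1,2) by (simp add: power_le_one)
    then have "\<beta> * q ^ j \<le> \<beta>" using False by (simp add: mult_left_le)
    then show ?thesis using assms(3) by simp
  qed
  have nz: "1 - B * Q ^ j \<noteq> 0" for j
  proof
    assume "1 - B * Q ^ j = 0"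
    then have "complex_of_real (1 - \<beta> * q ^ j) = 0" by (simp add: B_def Q_def)
    then have "1 - \<beta> * q ^ j = 0" by (simp only: of_real_eq_0_iff)
    with nzr[of j] show False by simp
  qed
  define f where "f m = qpoch (Q^2) Q m / qpoch B Q m / z ^ m" for m
  have rec: "f (Suc m) = (qpoch (Q^2) Q m / qpoch B Q m) * ((1 - Q^2*Q^m)/(1 - B*Q^m)) / (z * z^m)" for m
    by (simp add: f_def qpoch_Suc)
  have rec2: "f (Suc (Suc m)) = (qpoch (Q^2) Q m / qpoch B Q m) * ((1 - Q^2*Q^m)/(1 - B*Q^m))
      * ((1 - Q^2*(Q*Q^m))/(1 - B*(Q*Q^m))) / (z * (z * z^m))" for m
    by (simp add: f_def qpoch_Suc)
  have g1: "gtilde Q B Q (int m) = (1 - Q*Q^m)/(1 - B*Q^m)" for m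
    by (simp add: gtilde_def power_int_of_nat)
  have g2: "gtilde Q B Q (int m + 1) = (1 - Q*(Q*Q^m))/(1 - B*(Q*Q^m))" for m
  proof -
    have "int m + 1 = int (Suc m)" by simp
    then have "Q powi (int m + 1) = Q powi (int (Suc m))" by (simp only:)
    also have "\<dots> = Q ^ Suc m" by (rule power_int_of_nat)
    finally have "Q powi (int m + 1) = Q ^ Suc m" .
    then show ?thesis by (simp add: gtilde_def)
  qed
  have main: "pp Q B Q m x = f m \<and> pp Q B Q (Suc m) x = f (Suc m)" for m
  proof (induction m)
    case 0
    have "f 1 = (1 - Q^2) / (1 - B) / z" by (simp add: f_def qpoch_def)
    also have "\<dots> = x"
    proof -
      have "1 - Q^2 = (1 - B) * (1 + z^2)" using h by (simp add: algebra_simps)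
      then show ?thesis using nz[of 0] assms(4) unfolding x_def
        apply (simp add: field_simps power2_eq_square)
        apply (drule arg_cong[where f="\<lambda>t. z*t"])
        apply (simp add: algebra_simps)
        done
    qed
    finally show ?case by (simp add: f_def qpoch_def)
  next
    case (Suc m)
    have "pp Q B Q (Suc (Suc m)) x = x * f (Suc m) - gtilde Q B Q (int m) * gtilde Q B Q (int m + 1) * f m"
      using Suc.IH by simp
    also have "\<dots> = f (Suc (Suc m))"
    proof -
      have n1: "1 - B * Q ^ m \<noteq> 0" by (rule nz)
      have n2: "1 - B * (Q * Q ^ m) \<noteq> 0" using nz[of "Suc m"] by simp
      have fm: "f m = (qpoch (Q^2) Q m / qpoch B Q m) / z ^ m" by (simp add: f_def)
      show ?thesis unfolding rec2[of m] rec[of m] g1 g2 fm x_def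
        by (rule key[OF h n1 n2 assms(4), symmetric])
    qed
    finally show ?case using Suc.IH by simp
  qed
  have "pp Q B Q n x = qpoch (Q^2) Q n / (z^n * qpoch ((Q^2+z^2)/(1+z^2)) Q n)"
    using main[of n] unfolding f_def wB by (simp add: ac_simps)
  then show ?thesis unfolding Q_def B_def x_def .
qed

end
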